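(* Fix $r_0,u_0,\Lambda>0$. There is a constant $C>0$ depending on $r_0$ and $\Lambda$ (and the fixed parameters $u_0,q$) such that for every $(\mathring f,\mathring\lambda,\mathring e)\in D$, with $\mathring\mu$ the corresponding metric component, and all $r\ge0$: $$|\mathring e(r)|\le C\|\mathring f\|_{L^\infty},\qquad |\mathring\mu(r)|,\ |m(0,r)|\le C\|\mathring f\|_{L^\infty}(1+\|\mathring f\|_{L^\infty}),$$ where $m(0,r)=4\pi\int_0^rs^2\mathring\rho(s)ds$.
   Context: Units $G=c=1$; $q$ fixed charge; $r=|x|$. Constraint equations for data $(\mathring f,\mathring\lambda,\mathring\mu,\mathring e)$: $e^{-2\mathring\lambda}(2r\mathring\lambda'-1)+1=8\pi r^2\mathring\rho$, $e^{-2\mathring\lambda}(2r\mathring\mu'-1)+1=8\pi r^2\mathring p$, $\partial_r(r^2e^{\mathring\lambda}\mathring e)=qr^2e^{\mathring\lambda}\mathring M$, with $\mathring\rho=\int\mathring f\sqrt{1+|v|^2}dv+\frac12e^{2\mathring\lambda}\mathring e^2$, $\mathring p=\int(\frac{x\cdot v}r)^2\mathring f\frac{dv}{\sqrt{1+|v|^2}}-\frac12e^{2\mathring\lambda}\mathring e^2$, $\mathring M=\int\mathring f dv$, and boundary conditions $\mathring\lambda,\mathring\mu,\mathring e\to0$ as $r\to\infty$, $\mathring\lambda(0)=\mathring e(0)=0$; a regular solution has $\mathring\lambda\ge0$, $\mathring\mu\le0$, all $C^1$. For $r_0,u_0,\Lambda>0$, $D$ is the set of $(\mathring f,\mathring\lambda,\mathring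 e)$ with $\mathring f\in C^\infty(\mathbb R^6)$ nonnegative, spherically symmetric ($\mathring f(Ax,Av)=\mathring f(x,v)$, $A\in SO(3)$), $\operatorname{supp}\mathring f\subset B(r_0)\times B(u_0)$, $8\pi\int_0^rs^2\int\mathring f(s,v)\sqrt{1+|v|^2}dv\,ds<r$ for $r>0$, and $(\mathring\lambda,\mathring e)$ (with corresponding $\mathring\mu$) a regular solution of the constraints with $\|\mathring\lambda\|_{L^\infty}\le\Lambda$. *)

theory Defs
  imports "HOL-Analysis.Analysis"
begin

fun Ck :: "nat \<Rightarrow> ('a::euclidean_space \<Rightarrow> real) \<Rightarrow> bool" where
  "Ck 0 g = continuous_on UNIV g"
| "Ck (Suc k) g = ((\<forall>z. g differentiable (at z)) \<and> continuous_on UNIV g \<and>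
      (\<forall>i\<in>Basis. Ck k (\<lambda>z. frechet_derivative g (at z) i)))"

definition smooth :: "('a::euclidean_space \<Rightarrow> real) \<Rightarrow> bool" where
  "smooth g \<longleftrightarrow> (\<forall>k. Ck k g)"

text \<open>A point of R^3 with |x| = r (f is spherically symmetric, so the choice is immaterial).\<close>
definition radpt :: "real \<Rightarrow> real^3" where
  "radpt r = r *\<^sub>R axis 1 1"

definition spherically_symmetric :: "((real^3) \<times> (real^3) \<Rightarrow> real) \<Rightarrow> bool" where
  "spherically_symmetric f \<longleftrightarrow>
     (\<forall>A::real^3^3. orthogonal_matrix A \<and> det A = 1 \<longrightarrow>
        (\<forall>x v. f (A *v x, A *v v) = f (x, v)))"

definition rho_kin :: "((real^3) \<times> (real^3) \<Rightarrow> real) \<Rightarrow> real \<Rightarrow> real" where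
  "rho_kin f r = (\<integral>v. f (radpt r, v) * sqrt (1 + (norm v)^2) \<partial>lborel)"

definition rho :: "((real^3) \<times> (real^3) \<Rightarrow> real) \<Rightarrow> (real \<Rightarrow> real) \<Rightarrow> (real \<Rightarrow> real) \<Rightarrow> real \<Rightarrow> real" where
  "rho f lam e r = rho_kin f r + 1/2 * exp (2 * lam r) * (e r)^2"

definition pres :: "((real^3) \<times> (real^3) \<Rightarrow> real) \<Rightarrow> (real \<Rightarrow> real) \<Rightarrow> (real \<Rightarrow> real) \<Rightarrow> real \<Rightarrow> real" where
  "pres f lam e r =
     (\<integral>v. ((radpt r \<bullet> v) / r)^2 * f (radpt r, v) / sqrt (1 + (norm v)^2) \<partial>lborel)
     - 1/2 * exp (2 * lam r) * (e r)^2"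

definition Mdens :: "((real^3) \<times> (real^3) \<Rightarrow> real) \<Rightarrow> real \<Rightarrow> real" where
  "Mdens f r = (\<integral>v. f (radpt r, v) \<partial>lborel)"

definition C1_halfline :: "(real \<Rightarrow> real) \<Rightarrow> (real \<Rightarrow> real) \<Rightarrow> bool" where
  "C1_halfline g g' \<longleftrightarrow>
     (\<forall>r\<ge>0. (g has_real_derivative g' r) (at r within {0..})) \<and> continuous_on {0..} g'"

definition regular_solution ::
  "real \<Rightarrow> ((real^3) \<times> (real^3) \<Rightarrow> real) \<Rightarrow> (real \<Rightarrow> real) \<Rightarrow> (real \<Rightarrow> real) \<Rightarrow> (real \<Rightarrow> real) \<Rightarrow> bool" where
  "regular_solution q f lam mu e \<longleftrightarrow>
     (\<exists>lam' mu' e'. C1_halfline lam lam' \<and> C1_halfline mu mu' \<and> C1_halfline e e' \<and>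
       (\<forall>r>0. exp (-2 * lam r) * (2 * r * lam' r - 1) + 1 = 8 * pi * r^2 * rho f lam e r) \<and>
       (\<forall>r>0. exp (-2 * lam r) * (2 * r * mu' r - 1) + 1 = 8 * pi * r^2 * pres f lam e r) \<and>
       (\<forall>r>0. ((\<lambda>s. s^2 * exp (lam s) * e s) has_real_derivative
                 q * r^2 * exp (lam r) * Mdens f r) (at r))) \<and>
     (lam \<longlongrightarrow> 0) at_top \<and> (mu \<longlongrightarrow> 0) at_top \<and> (e \<longlongrightarrow> 0) at_top \<and>
     lam 0 = 0 \<and> e 0 = 0 \<and>
     (\<forall>r\<ge>0. lam r \<ge> 0) \<and> (\<forall>r\<ge>0. mu r \<le> 0)"

text \<open>The set D (with the corresponding \<mu> made explicit).\<close>
definition in_D ::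
  "real \<Rightarrow> real \<Rightarrow> real \<Rightarrow> real \<Rightarrow> ((real^3) \<times> (real^3) \<Rightarrow> real) \<Rightarrow> (real \<Rightarrow> real) \<Rightarrow> (real \<Rightarrow> real) \<Rightarrow> (real \<Rightarrow> real) \<Rightarrow> bool" where
  "in_D q r0 u0 Lam f lam mu e \<longleftrightarrow>
     smooth f \<and> (\<forall>z. f z \<ge> 0) \<and> spherically_symmetric f \<and>
     closure {z. f z \<noteq> 0} \<subseteq> ball 0 r0 \<times> ball 0 u0 \<and>
     (\<forall>r>0. 8 * pi * integral {0..r} (\<lambda>s. s^2 * rho_kin f s) < r) \<and>
     regular_solution q f lam mu e \<and>
     (\<forall>r\<ge>0. \<bar>lam r\<bar> \<le> Lam)"

definition sup_norm :: "((real^3) \<times> (real^3) \<Rightarrow> real) \<Rightarrow> real" where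
  "sup_norm f = (SUP z. \<bar>f z\<bar>)"

definition mass :: "((real^3) \<times> (real^3) \<Rightarrow> real) \<Rightarrow> (real \<Rightarrow> real) \<Rightarrow> (real \<Rightarrow> real) \<Rightarrow> real \<Rightarrow> real" where
  "mass f lam e r = 4 * pi * integral {0..r} (\<lambda>s. s^2 * rho f lam e s)"

end

theory Submission imports Defs begin

lemma within_at:
  assumes "(g has_real_derivative d) (at r within {0..})" "r > 0"
  shows "(g has_real_derivative d) (at r)"
proof -
  have "r \<in> interior {0::real..}" using assms(2) by simp
  then have "at r within {0::real..} = at r" by (rule at_within_interior)
  then show ?thesis using assms(1) by simp
qed

lemma C1_cont: assumes "C1_halfline g g'" shows "continuous_on {0..} g"
proof -
  have "\<forall>r\<ge>0. (g has_real_derivative g' r) (at r within {0..})" using assms unfolding C1_halfline_def by blast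
  then show ?thesis by (intro DERIV_continuous_on[where D=g']) simp
qed

lemma C1_deriv:
  assumes "C1_halfline g g'" "r > 0" shows "(g has_real_derivative g' r) (at r)"
proof -
  have "(g has_real_derivative g' r) (at r within {0..})" using assms unfolding C1_halfline_def by simp
  then show ?thesis using assms(2) by (rule within_at)
qed

lemma mvt_le:
  fixes F :: "real \<Rightarrow> real"
  assumes "a \<le> b" "continuous_on {a..b} F"
    "\<And>x. a < x \<Longrightarrow> x < b \<Longrightarrow> (F has_real_derivative F' x) (at x)"
    "\<And>x. a < x \<Longrightarrow> x < b \<Longrightarrow> F' x \<le> c"
  shows "F b - F a \<le> c * (b - a)"
proof (cases "a = b")
  case True then show ?thesis by simp
next
  case False
  then have "a < b" using assms(1) by simp
  have d: "\<And>x. a < x \<Longrightarrow> x < b \<Longrightarrow> F differentiable (at x)"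
    unfolding real_differentiable_def using assms(3) by blast
  from MVT[OF \<open>a < b\<close> assms(2) d] obtain l z where z: "a < z" "z < b" "DERIV F z :> l" "F b - F a = (b - a) * l"
    by blast
  have "l = F' z" using DERIV_unique[OF z(3) assms(3)[OF z(1,2)]] .
  then have "l \<le> c" using assms(4)[OF z(1,2)] by simp
  then have "(b - a) * l \<le> (b - a) * c" using \<open>a < b\<close> by (intro mult_left_mono) auto
  moreover have "c * (b - a) = (b - a) * c" by (rule mult.commute)
  ultimately show ?thesis using z(4) by linarith
qed

lemma mvt_abs:
  fixes F :: "real \<Rightarrow> real"
  assumes "a \<le> b" "continuous_on {a..b} F"
    "\<And>x. a < x \<Longrightarrow> x < b \<Longrightarrow> (F has_real_derivative F' x) (at x)"
    "\<And>x. a < x \<Longrightarrow> x < b \<Longrightarrow> \<bar>F' x\<bar> \<le> c"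
  shows "\<bar>F b - F a\<bar> \<le> c * (b - a)"
proof -
  have 1: "F b - F a \<le> c * (b - a)"
    by (rule mvt_le[OF assms(1,2,3)]) (use assms(4) in force)+
  have "(\<lambda>x. - F x) b - (\<lambda>x. - F x) a \<le> c * (b - a)"
  proof (rule mvt_le[OF assms(1)])
    show "continuous_on {a..b} (\<lambda>x. - F x)" using assms(2) by (intro continuous_intros)
    show "((\<lambda>x. - F x) has_real_derivative - F' x) (at x)" if "a < x" "x < b" for x
      using assms(3)[OF that] by (intro derivative_intros)
    show "- F' x \<le> c" if "a < x" "x < b" for x using assms(4)[OF that] by linarith
  qed
  then show ?thesis using 1 by linarith
qed

lemma e_bound:
  fixes lam e :: "real \<Rightarrow> real" and M :: "real \<Rightarrow> real"
  assumes lamC: "C1_halfline lam lam'" and eC: "C1_halfline e e'"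
    and hd: "\<forall>r>0. ((\<lambda>s. s^2 * exp (lam s) * e s) has_real_derivative q * r^2 * exp (lam r) * M r) (at r)"
    and lpos: "\<forall>r\<ge>0. lam r \<ge> 0" and lLam: "\<forall>r\<ge>0. lam r \<le> Lam"
    and Mb: "\<And>s. s \<ge> 0 \<Longrightarrow> \<bar>M s\<bar> \<le> NK" and M0: "\<And>s. s \<ge> r0 \<Longrightarrow> M s = 0"
    and r0: "r0 > 0" and r: "r > 0"
  shows "r * \<bar>e r\<bar> * (r0 + r) \<le> 2 * (\<bar>q\<bar> * exp Lam * NK) * r0^3"
    and "\<bar>e r\<bar> \<le> (\<bar>q\<bar> * exp Lam * NK) * r0"
proof -
  define B where "B = \<bar>q\<bar> * exp Lam * NK"
  define h where "h = (\<lambda>s. s^2 * exp (lam s) * e s)"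
  define h' where "h' = (\<lambda>r. q * r^2 * exp (lam r) * M r)"
  have hc: "continuous_on {0..} h" unfolding h_def
    using C1_cont[OF lamC] C1_cont[OF eC] by (intro continuous_intros) auto
  have hder: "\<And>x. x > 0 \<Longrightarrow> (h has_real_derivative h' x) (at x)" using hd unfolding h_def h'_def by auto
  have h0: "h 0 = 0" unfolding h_def by simp
  have NK: "0 \<le> NK" using Mb[of 0] by simp
  have B0: "0 \<le> B" unfolding B_def using NK by simp
  have h'b: "\<bar>h' x\<bar> \<le> B * x^2" if "x > 0" for x
  proof -
    have "\<bar>h' x\<bar> = \<bar>q\<bar> * x^2 * exp (lam x) * \<bar>M x\<bar>" unfolding h'_def by (simp add: abs_mult)
    also have "\<dots> \<le> \<bar>q\<bar> * x^2 * exp Lam * NK"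
      using that lLam Mb[of x] NK by (intro mult_mono) auto
    finally show ?thesis unfolding B_def by (simp add: algebra_simps)
  qed
  have h'0: "h' x = 0" if "x \<ge> r0" for x unfolding h'_def using M0[OF that] by simp
  have hsmall: "\<bar>h t\<bar> \<le> B * t^3" if "0 \<le> t" for t
  proof -
    have "\<bar>h t - h 0\<bar> \<le> (B * t^2) * (t - 0)"
    proof (rule mvt_abs[OF that])
      show "continuous_on {0..t} h" using hc by (rule continuous_on_subset) auto
      show "(h has_real_derivative h' x) (at x)" if "0 < x" "x < t" for x using hder that by simp
      show "\<bar>h' x\<bar> \<le> B * t^2" if "0 < x" "x < t" for x
      proof -
        have "x^2 \<le> t^2" using that by (intro power_mono) auto
        then have "B * x^2 \<le> B * t^2" using B0 by (rule mult_left_mono)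
        then show ?thesis using h'b[of x] that by linarith
      qed
    qed
    then show ?thesis using h0 by (simp add: power3_eq_cube power2_eq_square algebra_simps)
  qed
  have hbig: "h t = h r0" if "r0 \<le> t" for t
  proof -
    have "\<bar>h t - h r0\<bar> \<le> 0 * (t - r0)"
    proof (rule mvt_abs[OF that])
      show "continuous_on {r0..t} h" by (rule continuous_on_subset[OF hc]) (use r0 in auto)
      show "(h has_real_derivative h' x) (at x)" if "r0 < x" "x < t" for x using hder that r0 by simp
      show "\<bar>h' x\<bar> \<le> 0" if "r0 < x" "x < t" for x using h'0 that by simp
    qed
    then show ?thesis by simp
  qed
  have hr: "\<bar>h r\<bar> = r^2 * exp (lam r) * \<bar>e r\<bar>" unfolding h_def by (simp add: abs_mult)
  have "exp (lam r) \<ge> 1" using lpos r by simp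
  then have "\<bar>e r\<bar> \<le> exp (lam r) * \<bar>e r\<bar>"
    using mult_right_mono[OF \<open>exp (lam r) \<ge> 1\<close>, of "\<bar>e r\<bar>"] by simp
  then have "r^2 * \<bar>e r\<bar> \<le> r^2 * (exp (lam r) * \<bar>e r\<bar>)" by (intro mult_left_mono) auto
  then have er: "r^2 * \<bar>e r\<bar> \<le> \<bar>h r\<bar>" unfolding hr by (simp add: mult.assoc)
  have fin: "r * \<bar>e r\<bar> * (r0 + r) \<le> 2 * B * r0^3"
  proof (cases "r \<le> r0")
    case True
    have "r^2 * \<bar>e r\<bar> \<le> B * r^3" using er hsmall[of r] r by simp
    then have "r * \<bar>e r\<bar> \<le> B * r^2" using r by (simp add: power2_eq_square power3_eq_cube mult.assoc)
    then have "r * \<bar>e r\<bar> * (r0 + r) \<le> B * r^2 * (r0 + r)" using r r0 by (intro mult_right_mono) auto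
    also have "\<dots> \<le> B * r0^2 * (2 * r0)"
    proof -
      have "r^2 \<le> r0^2" using True r by (intro power_mono) auto
      moreover have "r0 + r \<le> 2 * r0" using True by simp
      ultimately have "r^2 * (r0 + r) \<le> r0^2 * (2 * r0)" using r r0 by (intro mult_mono) auto
      then show ?thesis using B0 by (simp add: mult_left_mono mult.assoc)
    qed
    also have "\<dots> = 2 * B * r0^3" by (simp add: power2_eq_square power3_eq_cube mult_ac)
    finally show ?thesis .
  next
    case False
    have "r^2 * \<bar>e r\<bar> \<le> B * r0^3" using er hsmall[of r0] hbig[of r] False r0 by simp
    have "r * \<bar>e r\<bar> * (r0 + r) \<le> r * \<bar>e r\<bar> * (2 * r)" using False r by (intro mult_left_mono) auto
    also have "\<dots> = 2 * (r^2 * \<bar>e r\<bar>)" by (simp add: power2_eq_square algebra_simps)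
    also have "\<dots> \<le> 2 * (B * r0^3)" using \<open>r^2 * \<bar>e r\<bar> \<le> B * r0^3\<close> by simp
    finally show ?thesis by (simp add: mult.assoc)
  qed
  then show "r * \<bar>e r\<bar> * (r0 + r) \<le> 2 * (\<bar>q\<bar> * exp Lam * NK) * r0^3" unfolding B_def by simp
  have fin2: "\<bar>e r\<bar> \<le> B * r0"
  proof (cases "r \<le> r0")
    case True
    have "r^2 * \<bar>e r\<bar> \<le> B * r^3" using er hsmall[of r] r by simp
    then have "r * (r * \<bar>e r\<bar>) \<le> r * (r * (B * r))" by (simp add: power2_eq_square power3_eq_cube mult_ac)
    then have "\<bar>e r\<bar> \<le> B * r" using r by (simp add: mult_le_cancel_left_pos)
    also have "\<dots> \<le> B * r0" using True B0 by (intro mult_left_mono) auto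
    finally show ?thesis .
  next
    case False
    have "r^2 * \<bar>e r\<bar> \<le> B * r0^3" using er hsmall[of r0] hbig[of r] False r0 by simp
    also have "\<dots> = (B * r0) * r0^2" by (simp add: power2_eq_square power3_eq_cube mult_ac)
    also have "\<dots> \<le> (B * r0) * r^2" using False B0 r0 by (intro mult_left_mono power_mono) auto
    finally have "r^2 * \<bar>e r\<bar> \<le> r^2 * (B * r0)" by (simp add: mult_ac)
    then show ?thesis using r by (simp add: mult_le_cancel_left_pos)
  qed
  then show "\<bar>e r\<bar> \<le> (\<bar>q\<bar> * exp Lam * NK) * r0" unfolding B_def by simp
qed

lemma G_deriv:
  assumes lamC: "C1_halfline lam lam'"
    and eq1: "\<forall>r>0. exp (-2 * lam r) * (2 * r * lam' r - 1) + 1 = 8 * pi * r^2 * rho f lam e r"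
    and x: "x > 0"
  shows "((\<lambda>s. s * (1 - exp (-2 * lam s)) / 2) has_real_derivative 4 * pi * x^2 * rho f lam e x) (at x)"
proof -
  have dl: "(lam has_real_derivative lam' x) (at x)" by (rule C1_deriv[OF lamC x])
  have d: "((\<lambda>s. s * (1 - exp (-2 * lam s)) / 2) has_real_derivative
      ((1 - exp (-2 * lam x)) + x * (exp (-2 * lam x) * (2 * lam' x))) / 2) (at x)"
    using dl by (auto intro!: derivative_eq_intros simp: field_simps)
  have e: "((1 - exp (-2 * lam x)) + x * (exp (-2 * lam x) * (2 * lam' x))) / 2 = 4 * pi * x^2 * rho f lam e x"
  proof -
    have H: "exp (-2 * lam x) * (2 * x * lam' x - 1) + 1 = 8 * pi * x^2 * rho f lam e x" using eq1 x by blast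
    have a: "(1 - exp (-2 * lam x)) + x * (exp (-2 * lam x) * (2 * lam' x)) = exp (-2 * lam x) * (2 * x * lam' x - 1) + 1"
      by (simp add: algebra_simps)
    show ?thesis unfolding a H by simp
  qed
  show ?thesis using d unfolding e .
qed

lemma mass_formula:
  assumes lamC: "C1_halfline lam lam'"
    and eq1: "\<forall>r>0. exp (-2 * lam r) * (2 * r * lam' r - 1) + 1 = 8 * pi * r^2 * rho f lam e r"
    and r: "r \<ge> 0"
  shows "mass f lam e r = r * (1 - exp (-2 * lam r)) / 2"
proof -
  define G where "G = (\<lambda>s::real. s * (1 - exp (-2 * lam s)) / 2 / (4 * pi))"
  have "((\<lambda>s. s^2 * rho f lam e s) has_integral (G r - G 0)) {0..r}"
  proof (rule fundamental_theorem_of_calculus_interior[OF r])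
    show "continuous_on {0..r} G" unfolding G_def using C1_cont[OF lamC]
      by (intro continuous_intros continuous_on_subset[OF C1_cont[OF lamC]]) auto
    fix x assume "x \<in> {0<..<r}"
    then have x: "x > 0" by simp
    have "(G has_real_derivative 4 * pi * x^2 * rho f lam e x / (4 * pi)) (at x)"
      unfolding G_def by (intro DERIV_cdivide G_deriv[OF lamC eq1 x])
    then show "(G has_vector_derivative x^2 * rho f lam e x) (at x)"
      unfolding has_real_derivative_iff_has_vector_derivative by simp
  qed
  then have "integral {0..r} (\<lambda>s. s^2 * rho f lam e s) = G r - G 0" by (rule integral_unique)
  then show ?thesis unfolding mass_def G_def by simp
qed

lemma mass_upper:
  assumes lamC: "C1_halfline lam lam'"
    and eq1: "\<forall>r>0. exp (-2 * lam r) * (2 * r * lam' r - 1) + 1 = 8 * pi * r^2 * rho f lam e r"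
    and rb: "\<And>s. s > 0 \<Longrightarrow> 4 * pi * s^2 * rho f lam e s * (r0 + s)^2 \<le> W"
    and W: "W \<ge> 0" and r0: "r0 > 0" and r: "r \<ge> 0"
  shows "r * (1 - exp (-2 * lam r)) / 2 \<le> W / r0"
proof -
  define P where "P = (\<lambda>s. s * (1 - exp (-2 * lam s)) / 2 - W * (1 / r0 - 1 / (r0 + s)))"
  have "P r - P 0 \<le> 0 * (r - 0)"
  proof (rule mvt_le[OF r])
    show "continuous_on {0..r} P" unfolding P_def using r0
      by (intro continuous_intros continuous_on_subset[OF C1_cont[OF lamC]]) auto
    fix x assume x: "0 < x" "x < r"
    show "(P has_real_derivative (4 * pi * x^2 * rho f lam e x - W / (r0 + x)^2)) (at x)"
    proof -
      have g: "((\<lambda>s. s * (1 - exp (-2 * lam s)) / 2) has_real_derivative 4 * pi * x^2 * rho f lam e x) (at x)"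
        by (rule G_deriv[OF lamC eq1 x(1)])
      have w: "((\<lambda>s. W * (1 / r0 - 1 / (r0 + s))) has_real_derivative W / (r0 + x)^2) (at x)"
        using x r0 by (auto intro!: derivative_eq_intros simp: power2_eq_square)
      show ?thesis unfolding P_def by (rule DERIV_diff[OF g w])
    qed
    have pos: "(r0 + x)^2 > 0" using x r0 by simp
    have "4 * pi * x^2 * rho f lam e x \<le> W / (r0 + x)^2"
      using rb[OF x(1)] pos by (simp add: pos_le_divide_eq)
    then show "4 * pi * x^2 * rho f lam e x - W / (r0 + x)^2 \<le> 0" by simp
  qed
  then have "r * (1 - exp (-2 * lam r)) / 2 \<le> W * (1 / r0 - 1 / (r0 + r))" unfolding P_def by simp
  also have "\<dots> \<le> W * (1 / r0)" using W r0 r by (intro mult_left_mono) auto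
  finally show ?thesis by simp
qed

lemma mu_bound:
  assumes muC: "C1_halfline mu mu'"
    and lpos: "\<forall>r\<ge>0. lam r \<ge> 0" and lLam: "\<forall>r\<ge>0. lam r \<le> Lam"
    and eq2: "\<forall>r>0. exp (-2 * lam r) * (2 * r * mu' r - 1) + 1 = 8 * pi * r^2 * p r"
    and pP: "\<And>r. r > 0 \<Longrightarrow> p r \<le> Pk r"
    and Pk: "\<And>r. r > 0 \<Longrightarrow> 0 \<le> Pk r \<and> Pk r \<le> Pb"
    and Pk0: "\<And>r. r \<ge> r0 \<Longrightarrow> Pk r = 0"
    and lim: "(mu \<longlongrightarrow> 0) at_top" and mneg: "\<forall>r\<ge>0. mu r \<le> 0"
    and r0: "r0 > 0" and r: "r \<ge> 0"
  shows "\<bar>mu r\<bar> \<le> exp (2 * Lam) * 4 * pi * r0 * Pb * r0"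
proof -
  have mub: "mu' x \<le> exp (2 * Lam) * 4 * pi * x * Pk x" if x: "x > 0" for x
  proof -
    define E where "E = exp (2 * lam x)"
    have E1: "E \<ge> 1" unfolding E_def using lpos x by simp
    have EL: "E \<le> exp (2 * Lam)" unfolding E_def using lLam x by simp
    have inv: "E * exp (-2 * lam x) = 1" unfolding E_def by (simp add: exp_add[symmetric])
    have "exp (-2 * lam x) * (2 * x * mu' x - 1) = 8 * pi * x^2 * p x - 1" using eq2 x by force
    note H = this
    have "2 * x * mu' x - 1 = (E * exp (-2 * lam x)) * (2 * x * mu' x - 1)" using inv by simp
    also have "\<dots> = E * (exp (-2 * lam x) * (2 * x * mu' x - 1))" by (simp only: mult.assoc)
    also have "\<dots> = E * (8 * pi * x^2 * p x - 1)" using H by simp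
    finally have "2 * x * mu' x - 1 = E * (8 * pi * x^2 * p x - 1)" .
    then have eqm: "2 * x * mu' x = E * (8 * pi * x^2 * p x) + (1 - E)" by (simp add: algebra_simps)
    have "E * (8 * pi * x^2 * p x) \<le> E * (8 * pi * x^2 * Pk x)"
      using pP[OF x] E1 by (intro mult_left_mono) auto
    also have "\<dots> \<le> exp (2 * Lam) * (8 * pi * x^2 * Pk x)"
      using EL Pk[OF x] by (intro mult_right_mono) auto
    finally have c: "E * (8 * pi * x^2 * p x) \<le> exp (2 * Lam) * (8 * pi * x^2 * Pk x)" .
    have d: "2 * x * (exp (2 * Lam) * 4 * pi * x * Pk x) = exp (2 * Lam) * (8 * pi * x^2 * Pk x)"
      by (simp add: power2_eq_square mult_ac)
    have "2 * x * mu' x \<le> 2 * x * (exp (2 * Lam) * 4 * pi * x * Pk x)"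
      using eqm E1 c d by linarith
    then show ?thesis using x by (simp add: mult_le_cancel_left_pos mult_ac)
  qed
  define Dm where "Dm = exp (2 * Lam) * 4 * pi * r0 * Pb"
  have Pb0: "0 \<le> Pb" using Pk[of r0] r0 by simp
  have mub2: "mu' x \<le> Dm" if "0 < x" "x < r0" for x
  proof -
    have "exp (2 * Lam) * 4 * pi * x * Pk x \<le> exp (2 * Lam) * 4 * pi * r0 * Pb"
      using that Pk[of x] by (intro mult_mono) auto
    then show ?thesis using mub[of x] that unfolding Dm_def by linarith
  qed
  have mub3: "mu' x \<le> 0" if "r0 \<le> x" for x using mub[of x] Pk0[OF that] that r0 by simp
  have mc: "continuous_on {a..b} mu" if "0 \<le> a" for a b
    by (rule continuous_on_subset[OF C1_cont[OF muC]]) (use that in auto)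
  have big: "mu s = 0" if s: "r0 \<le> s" for s
  proof -
    have "mu t - mu s \<le> 0" if t: "s \<le> t" for t
    proof -
      have "mu t - mu s \<le> 0 * (t - s)"
      proof (rule mvt_le[OF t mc])
        show "0 \<le> s" using s r0 by simp
        show "(mu has_real_derivative mu' x) (at x)" if "s < x" "x < t" for x
          using C1_deriv[OF muC] that s r0 by simp
        show "mu' x \<le> 0" if "s < x" "x < t" for x using mub3 that s by simp
      qed
      then show ?thesis by simp
    qed
    then have "eventually (\<lambda>t. mu t \<le> mu s) at_top" unfolding eventually_at_top_linorder by force
    then have "0 \<le> mu s" using tendsto_upperbound[OF lim] by simp
    moreover have "mu s \<le> 0" using mneg s r0 by simp
    ultimately show ?thesis by simp
  qed
  show ?thesis
  proof (cases "r0 \<le> r")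
    case True
    have "0 \<le> exp (2 * Lam) * 4 * pi * r0 * Pb * r0" using Pb0 r0 by simp
    then show ?thesis using big[OF True] by simp
  next
    case False
    have "mu r0 - mu r \<le> Dm * (r0 - r)"
    proof (rule mvt_le)
      show "r \<le> r0" using False by simp
      show "continuous_on {r..r0} mu" using mc r by simp
      show "(mu has_real_derivative mu' x) (at x)" if "r < x" "x < r0" for x
        using C1_deriv[OF muC] that r by simp
      show "mu' x \<le> Dm" if "r < x" "x < r0" for x using mub2 that r by simp
    qed
    moreover have "Dm * (r0 - r) \<le> Dm * r0" using r Pb0 r0 unfolding Dm_def by (intro mult_left_mono) auto
    ultimately have "- mu r \<le> Dm * r0" using big[of r0] by simp
    then show ?thesis using mneg r unfolding Dm_def by force
  qed
qed

lemma norm_radpt: "norm (radpt r) = \<bar>r\<bar>"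
  by (simp add: radpt_def)

lemma int_bound:
  fixes g :: "real^3 \<Rightarrow> real"
  assumes "\<And>v. 0 \<le> g v" "\<And>v. g v \<le> c * indicator (ball 0 u) v"
  shows "integral\<^sup>L lborel g \<le> c * measure lborel (ball (0::real^3) u)"
proof -
  have fin: "emeasure lborel (ball (0::real^3) u) < \<infinity>" by (intro emeasure_bounded_finite) simp
  have int: "integrable lborel (indicator (ball (0::real^3) u) :: _ \<Rightarrow> real)"
    using fin by (simp add: integrable_indicator_iff)
  have int2: "integrable lborel (\<lambda>v. c * indicator (ball (0::real^3) u) v :: real)"
    using int by simp
  have "integral\<^sup>L lborel g \<le> integral\<^sup>L lborel (\<lambda>v. c * indicator (ball (0::real^3) u) v)"
    using Bochner_Integration.integral_mono'[OF int2, of g] assms by (meson order_trans)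
  then show ?thesis by simp
qed

lemma vint:
  fixes f :: "(real^3) \<times> (real^3) \<Rightarrow> real" and w :: "real^3 \<Rightarrow> real"
  assumes f1: "\<And>z. 0 \<le> f z \<and> f z \<le> N"
    and f2: "\<And>z. f z \<noteq> 0 \<Longrightarrow> z \<in> ball 0 r0 \<times> ball 0 u0"
    and w1: "\<And>v. 0 \<le> w v" and w2: "\<And>v. norm v < u0 \<Longrightarrow> w v \<le> c"
  shows "0 \<le> (\<integral>v. f (radpt s, v) * w v \<partial>lborel)"
    "(\<integral>v. f (radpt s, v) * w v \<partial>lborel) \<le> N * c * measure lborel (ball (0::real^3) u0)"
    "r0 \<le> \<bar>s\<bar> \<Longrightarrow> (\<integral>v. f (radpt s, v) * w v \<partial>lborel) = 0"
proof -
  show "0 \<le> (\<integral>v. f (radpt s, v) * w v \<partial>lborel)"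
    by (intro Bochner_Integration.integral_nonneg) (simp add: f1 w1)
  show "(\<integral>v. f (radpt s, v) * w v \<partial>lborel) \<le> N * c * measure lborel (ball (0::real^3) u0)"
  proof (rule int_bound)
    fix v
    show "0 \<le> f (radpt s, v) * w v" by (simp add: f1 w1)
    show "f (radpt s, v) * w v \<le> N * c * indicator (ball 0 u0) v"
    proof (cases "f (radpt s, v) = 0")
      case True
      have "0 \<le> N" using f1 order_trans by blast
      moreover have "norm v < u0 \<Longrightarrow> 0 \<le> c" using w1[of v] w2[of v] by simp
      ultimately show ?thesis using True by (auto simp: indicator_def)
    next
      case False
      then have "norm v < u0" using f2[OF False] by simp
      then have "f (radpt s, v) * w v \<le> N * c" using f1 w1 w2 by (intro mult_mono) (auto intro: order_trans)
      then show ?thesis using \<open>norm v < u0\<close> by (simp add: indicator_def)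
    qed
  qed
  assume "r0 \<le> \<bar>s\<bar>"
  then have "\<And>v. f (radpt s, v) = 0" using f2 norm_radpt by fastforce
  then show "(\<integral>v. f (radpt s, v) * w v \<partial>lborel) = 0" by simp
qed

lemma f_facts:
  assumes D: "in_D q r0 u0 Lam f lam mu e"
  shows "\<And>z. 0 \<le> f z \<and> f z \<le> sup_norm f"
    and "\<And>z. f z \<noteq> 0 \<Longrightarrow> z \<in> ball 0 r0 \<times> ball 0 u0"
proof -
  have sm: "smooth f" and nn: "\<And>z. 0 \<le> f z"
    and sp: "closure {z. f z \<noteq> 0} \<subseteq> ball 0 r0 \<times> ball 0 u0"
    using D unfolding in_D_def by auto
  have cont: "continuous_on UNIV f" using sm unfolding smooth_def
    by (metis Ck.simps(1))
  show sup: "\<And>z. f z \<noteq> 0 \<Longrightarrow> z \<in> ball 0 r0 \<times> ball 0 u0"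
  proof -
    fix z assume "f z \<noteq> 0"
    then have "z \<in> closure {z. f z \<noteq> 0}" by (intro closure_subset[THEN subsetD]) simp
    then show "z \<in> ball 0 r0 \<times> ball 0 u0" using sp by (rule subsetD[rotated])
  qed
  let ?S = "closure {z. f z \<noteq> 0}"
  have "bounded (ball (0::real^3) r0 \<times> ball (0::real^3) u0)" by (intro bounded_Times) auto
  then have "bounded ?S" using sp by (rule bounded_subset)
  then have "compact ?S" by (simp add: compact_eq_bounded_closed)
  then have "compact (f ` ?S)" using cont by (intro compact_continuous_image continuous_on_subset[OF cont]) auto
  then have "bounded (f ` ?S)" by (rule compact_imp_bounded)
  then obtain B where B: "\<And>x. x \<in> f ` ?S \<Longrightarrow> \<bar>x\<bar> \<le> B" by (auto simp: bounded_real)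
  have allB: "\<bar>f z\<bar> \<le> max B 0" for z
  proof (cases "f z = 0")
    case False then have "z \<in> ?S" by (intro closure_subset[THEN subsetD]) simp
    then show ?thesis using B by fastforce
  qed simp
  have bdd: "bdd_above (range (\<lambda>z. \<bar>f z\<bar>))" using allB by (intro bdd_aboveI2) 
  fix z
  have "\<bar>f z\<bar> \<le> sup_norm f" unfolding sup_norm_def using bdd by (intro cSUP_upper) auto
  then show "0 \<le> f z \<and> f z \<le> sup_norm f" using nn by simp
qed


lemma div_le_self:
  fixes x y :: real
  assumes "0 \<le> x" "1 \<le> y"
  shows "x / y \<le> x"
proof -
  have "x / y \<le> x / 1" by (rule divide_left_mono) (use assms in auto)
  then show ?thesis by simp
qed

theorem proposition4p1:
  fixes q r0 u0 Lam :: real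
  assumes "r0 > 0" and "u0 > 0" and "Lam > 0"
  shows "\<exists>C>0. \<forall>f lam mu e. in_D q r0 u0 Lam f lam mu e \<longrightarrow>
           (\<forall>r\<ge>0. \<bar>e r\<bar> \<le> C * sup_norm f \<and>
                   \<bar>mu r\<bar> \<le> C * sup_norm f * (1 + sup_norm f) \<and>
                   \<bar>mass f lam e r\<bar> \<le> C * sup_norm f * (1 + sup_norm f))"
proof -
  note r0 = assms(1) and u0 = assms(2)
  define K where "K = measure lborel (ball (0::real^3) u0)"
  define S where "S = sqrt (1 + u0^2)"
  define ce where "ce = \<bar>q\<bar> * exp Lam * K * r0"
  define cm1 where "cm1 = 16 * pi * S * K * r0^3"
  define cm2 where "cm2 = 8 * pi * exp (2 * Lam) * (\<bar>q\<bar> * exp Lam * K)^2 * r0^5"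
  define cmu where "cmu = exp (2 * Lam) * 4 * pi * r0 * u0^2 * K * r0"
  define C where "C = 1 + ce + cm1 + cm2 + cmu"
  have K0: "0 \<le> K" unfolding K_def by simp
  have S0: "0 \<le> S" unfolding S_def by simp
  have ce0: "0 \<le> ce" unfolding ce_def using K0 r0 by simp
  have cm10: "0 \<le> cm1" unfolding cm1_def using K0 S0 r0 by simp
  have cm20: "0 \<le> cm2" unfolding cm2_def using r0 by simp
  have cmu0: "0 \<le> cmu" unfolding cmu_def using K0 r0 by simp
  have Cpos: "C > 0" unfolding C_def using ce0 cm10 cm20 cmu0 by linarith
  have ceC: "ce \<le> C" and cm1C: "cm1 \<le> C" and cm2C: "cm2 \<le> C" and cmuC: "cmu \<le> C"
    unfolding C_def using ce0 cm10 cm20 cmu0 by linarith+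
  have main: "\<bar>e r\<bar> \<le> C * sup_norm f \<and>
                   \<bar>mu r\<bar> \<le> C * sup_norm f * (1 + sup_norm f) \<and>
                   \<bar>mass f lam e r\<bar> \<le> C * sup_norm f * (1 + sup_norm f)"
    if D: "in_D q r0 u0 Lam f lam mu e" and r: "r \<ge> 0" for f lam mu e r
  proof -
    define N where "N = sup_norm f"
    have fb: "\<And>z. 0 \<le> f z \<and> f z \<le> N" using f_facts(1)[OF D] unfolding N_def .
    have fs: "\<And>z. f z \<noteq> 0 \<Longrightarrow> z \<in> ball 0 r0 \<times> ball 0 u0" using f_facts(2)[OF D] .
    have N0: "0 \<le> N" using fb[of undefined] by linarith
    have reg: "regular_solution q f lam mu e" and lamb: "\<forall>r\<ge>0. \<bar>lam r\<bar> \<le> Lam"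
      using D unfolding in_D_def by auto
    obtain lam' mu' e' where lamC: "C1_halfline lam lam'" and muC: "C1_halfline mu mu'"
      and eC: "C1_halfline e e'"
      and eq1: "\<forall>r>0. exp (-2 * lam r) * (2 * r * lam' r - 1) + 1 = 8 * pi * r^2 * rho f lam e r"
      and eq2: "\<forall>r>0. exp (-2 * lam r) * (2 * r * mu' r - 1) + 1 = 8 * pi * r^2 * pres f lam e r"
      and eq3: "\<forall>r>0. ((\<lambda>s. s^2 * exp (lam s) * e s) has_real_derivative
                 q * r^2 * exp (lam r) * Mdens f r) (at r)"
      and mulim: "(mu \<longlongrightarrow> 0) at_top" and e0: "e 0 = 0"
      and lpos: "\<forall>r\<ge>0. lam r \<ge> 0" and mneg: "\<forall>r\<ge>0. mu r \<le> 0"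
      using reg unfolding regular_solution_def by blast
    have lLam: "\<forall>r\<ge>0. lam r \<le> Lam" using lamb by (auto simp: abs_le_iff)
    have Mb: "\<bar>Mdens f s\<bar> \<le> N * K" if "s \<ge> 0" for s
    proof -
      have "0 \<le> (\<integral>v. f (radpt s, v) * (\<lambda>v. 1) v \<partial>lborel)"
        "(\<integral>v. f (radpt s, v) * (\<lambda>v. 1) v \<partial>lborel) \<le> N * 1 * K"
        using vint(1,2)[where f=f and N=N and w="\<lambda>v. 1" and c=1 and s=s, OF fb fs] unfolding K_def by simp_all
      then show ?thesis by (simp add: Mdens_def)
    qed
    have M0: "Mdens f s = 0" if "s \<ge> r0" for s
    proof -
      have eq: "Mdens f s = (\<integral>v. f (radpt s, v) * (\<lambda>v. 1) v \<partial>lborel)" by (simp add: Mdens_def)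
      show ?thesis unfolding eq by (rule vint(3)[where f=f and N=N and w="\<lambda>v. 1" and c=1 and s=s, OF fb fs]) (use that r0 in auto)
    qed
    define B where "B = \<bar>q\<bar> * exp Lam * (N * K)"
    have B0: "0 \<le> B" unfolding B_def using N0 K0 by simp
    have eb1: "s * \<bar>e s\<bar> * (r0 + s) \<le> 2 * B * r0^3" if "s > 0" for s
      using e_bound(1)[OF lamC eC eq3 lpos lLam Mb M0 r0 that] unfolding B_def by simp
    have eb2: "\<bar>e s\<bar> \<le> B * r0" if "s > 0" for s
      using e_bound(2)[OF lamC eC eq3 lpos lLam Mb M0 r0 that] unfolding B_def by simp
    have E: "\<bar>e r\<bar> \<le> C * N"
    proof (cases "r = 0")
      case True then show ?thesis using e0 Cpos N0 by simp
    next
      case False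
      then have "\<bar>e r\<bar> \<le> B * r0" using eb2 r by simp
      also have "\<dots> = ce * N" unfolding B_def ce_def by (simp add: mult_ac)
      also have "\<dots> \<le> C * N" using ceC N0 by (rule mult_right_mono)
      finally show ?thesis .
    qed
    define w where "w = (\<lambda>s (v::real^3). ((radpt s \<bullet> v) / s)^2 / sqrt (1 + (norm v)^2))"
    define Pk where "Pk = (\<lambda>s. (\<integral>v. f (radpt s, v) * w s v \<partial>lborel))"
    have w0: "0 \<le> w s v" for s v
    proof -
      have "0 < 1 + (norm v)^2" using zero_le_power2[of "norm v"] by linarith
      then have p: "0 < sqrt (1 + (norm v)^2)" by simp
      show ?thesis unfolding w_def by (rule divide_nonneg_pos[OF zero_le_power2 p])
    qed
    have wb: "w s v \<le> u0^2" if "s > 0" "norm v < u0" for s v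
    proof -
      have "\<bar>radpt s \<bullet> v\<bar> \<le> norm (radpt s) * norm v" by (rule Cauchy_Schwarz_ineq2)
      then have "\<bar>radpt s \<bullet> v\<bar> \<le> s * norm v" using that by (simp add: norm_radpt)
      then have "\<bar>(radpt s \<bullet> v) / s\<bar> \<le> norm v" using that by (simp add: divide_le_eq mult.commute)
      then have "\<bar>(radpt s \<bullet> v) / s\<bar> \<le> u0" using that by simp
      then have a: "((radpt s \<bullet> v) / s)^2 \<le> u0^2"
        by (metis abs_ge_zero power2_abs power_mono)
      have "1 \<le> sqrt (1 + (norm v)^2)" by simp
      then have "((radpt s \<bullet> v) / s)^2 / sqrt (1 + (norm v)^2) \<le> ((radpt s \<bullet> v) / s)^2"
        by (rule div_le_self[OF zero_le_power2])
      then show ?thesis using a unfolding w_def by linarith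
    qed
    have Pkb: "0 \<le> Pk s \<and> Pk s \<le> N * u0^2 * K" if "s > 0" for s
      unfolding Pk_def K_def
      using vint(1,2)[where f=f and N=N and w="w s" and c="u0^2" and s=s, OF fb fs w0 wb[OF that]]
      by blast
    have Pk0: "Pk s = 0" if "s \<ge> r0" for s
    proof -
      have "s > 0" using that r0 by simp
      then show ?thesis unfolding Pk_def
        using vint(3)[where f=f and N=N and w="w s" and c="u0^2" and s=s, OF fb fs w0 wb[OF \<open>s > 0\<close>]] that
        by simp
    qed
    have pP: "pres f lam e s \<le> Pk s" if "s > 0" for s
    proof -
      have "(\<integral>v. ((radpt s \<bullet> v) / s)^2 * f (radpt s, v) / sqrt (1 + (norm v)^2) \<partial>lborel) = Pk s"
        unfolding Pk_def w_def by (rule Bochner_Integration.integral_cong) (simp_all add: mult.commute)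
      moreover have "0 \<le> 1/2 * exp (2 * lam s) * (e s)^2" by simp
      ultimately show ?thesis unfolding pres_def by linarith
    qed
    have "\<bar>mu r\<bar> \<le> exp (2 * Lam) * 4 * pi * r0 * (N * u0^2 * K) * r0"
      by (rule mu_bound[OF muC lpos lLam eq2 pP Pkb Pk0 mulim mneg r0 r])
    also have "\<dots> = cmu * N" unfolding cmu_def by (simp add: mult_ac)
    also have "\<dots> \<le> C * N" using cmuC N0 by (rule mult_right_mono)
    also have "\<dots> \<le> C * N * (1 + N)" using mult_left_mono[of 1 "1 + N" "C * N"] Cpos N0 by simp
    finally have MU: "\<bar>mu r\<bar> \<le> C * N * (1 + N)" .
    have mf: "mass f lam e r = r * (1 - exp (-2 * lam r)) / 2" by (rule mass_formula[OF lamC eq1 r])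
    have "exp (-2 * lam r) \<le> 1" using lpos r by simp
    then have mpos: "0 \<le> mass f lam e r" unfolding mf using r by simp
    define W where "W = 16 * pi * N * S * K * r0^4 + 8 * pi * exp (2 * Lam) * B^2 * r0^6"
    have W0: "0 \<le> W" unfolding W_def using N0 S0 K0 r0 by simp
    have rb: "4 * pi * s^2 * rho f lam e s * (r0 + s)^2 \<le> W" if s: "s > 0" for s
    proof -
      have Sb: "\<And>v. norm v < u0 \<Longrightarrow> sqrt (1 + (norm v)^2) \<le> S"
          unfolding S_def by (simp add: power_strict_mono less_imp_le)
      have rk: "0 \<le> rho_kin f s \<and> rho_kin f s \<le> N * S * K"
      proof -
        from Sb show ?thesis unfolding rho_kin_def K_def
          using vint(1,2)[where f=f and N=N and w="\<lambda>v. sqrt (1 + (norm v)^2)" and c=S and s=s, OF fb fs] by (simp, blast)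
      qed
      have T1: "s^2 * rho_kin f s * (r0 + s)^2 \<le> N * S * K * (4 * r0^4)"
      proof (cases "s < r0")
        case True
        have a: "s^2 \<le> r0^2" using True s by (intro power_mono) auto
        have b: "(r0 + s)^2 \<le> (2 * r0)^2" using True s by (intro power_mono) auto
        have "s^2 * (r0 + s)^2 \<le> r0^2 * (2 * r0)^2" using a b by (intro mult_mono) auto
        also have "\<dots> = 4 * r0^4" by (simp add: power2_eq_square power4_eq_xxxx)
        finally have c: "s^2 * (r0 + s)^2 \<le> 4 * r0^4" .
        have "s^2 * rho_kin f s * (r0 + s)^2 = rho_kin f s * (s^2 * (r0 + s)^2)" by (simp add: mult_ac)
        also have "\<dots> \<le> (N * S * K) * (4 * r0^4)" using rk c N0 S0 K0 by (rule_tac mult_mono) auto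
        finally show ?thesis .
      next
        case False
        have "rho_kin f s = 0" unfolding rho_kin_def
          by (rule vint(3)[where f=f and N=N and w="\<lambda>v. sqrt (1 + (norm v)^2)" and c=S and s=s, OF fb fs]) (use False s Sb in auto)
        then show ?thesis using N0 S0 K0 by simp
      qed
      have T2: "(s * \<bar>e s\<bar> * (r0 + s))^2 \<le> (2 * B * r0^3)^2"
        using eb1[OF s] s r0 by (intro power_mono) auto
      have ex: "exp (2 * lam s) \<le> exp (2 * Lam)" using lLam s by simp
      have T3: "exp (2 * lam s) * (s * \<bar>e s\<bar> * (r0 + s))^2 \<le> exp (2 * Lam) * (2 * B * r0^3)^2"
        using ex T2 by (intro mult_mono) auto
      have "4 * pi * s^2 * rho f lam e s * (r0 + s)^2
          = 4 * pi * (s^2 * rho_kin f s * (r0 + s)^2) + 2 * pi * (exp (2 * lam s) * (s * \<bar>e s\<bar> * (r0 + s))^2)"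
      proof -
        have sq: "(s * \<bar>e s\<bar> * (r0 + s))^2 = s^2 * (e s)^2 * (r0 + s)^2" by (simp add: power_mult_distrib)
        show ?thesis unfolding rho_def sq by (simp add: algebra_simps)
      qed
      also have "\<dots> \<le> 4 * pi * (N * S * K * (4 * r0^4)) + 2 * pi * (exp (2 * Lam) * (2 * B * r0^3)^2)"
        using T1 T3 by (intro add_mono mult_left_mono) auto
      also have "\<dots> = W" unfolding W_def by (simp add: power_mult_distrib power2_eq_square algebra_simps)
      finally show ?thesis .
    qed
    have "mass f lam e r \<le> W / r0" unfolding mf by (rule mass_upper[OF lamC eq1 rb W0 r0 r])
    also have "\<dots> = cm1 * N + cm2 * N^2"
      unfolding W_def cm1_def cm2_def B_def using r0
      by (simp add: field_simps power_mult_distrib eval_nat_numeral)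
    also have "\<dots> \<le> C * N + C * N^2" using cm1C cm2C N0 by (intro add_mono mult_right_mono) auto
    also have "\<dots> = C * N * (1 + N)" by (simp add: algebra_simps power2_eq_square)
    finally have MA: "\<bar>mass f lam e r\<bar> \<le> C * N * (1 + N)" using mpos by simp
    show ?thesis using E MU MA unfolding N_def by simp
  qed
  show ?thesis using Cpos main by blast
qed

end
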